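(* Fix $I\in\mathbb{N}$. For $\rho \in [0,1]^I$ satisfying $\sum_{i=1}^I 2i \rho_i <1$, the $I\times I$ matrix $M=M(\rho)$ with entries $M_{ii}(\rho)=1-\sum_{j \neq i} 2(i \wedge j) \rho_j$ and $M_{ij}(\rho)=2(i\wedge j)\rho_j$ for $i\neq j$ is invertible. *)

theory Defs
  imports "Jordan_Normal_Form.Matrix"
begin

text \<open>Indices are 0-based in Isabelle: the
  paper's index i in {1..I} corresponds to the Isabelle index i-1, so the paper's
  entry rho_i is rho (i-1) and i \<wedge> j = min i j.\<close>

definition M_mat :: "nat \<Rightarrow> (nat \<Rightarrow> real) \<Rightarrow> real mat" where
  "M_mat I \<rho> = mat I I (\<lambda>(a, b).
     if a = b then 1 - (\<Sum>j\<in>{0..<I} - {a}. 2 * real (min (a+1) (j+1)) * \<rho> j)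
     else 2 * real (min (a+1) (b+1)) * \<rho> b)"

end

theory Submission imports Defs "Jordan_Normal_Form.Determinant" begin
lemma min_as_sum:
  assumes "i < n" "j < n"
  shows "real (min (i+1) (j+1)) = (\<Sum>k<n. (if k \<le> i then 1 else 0) * (if k \<le> j then (1::real) else 0))"
proof -
  have "(\<Sum>k<n. (if k \<le> i then 1 else 0) * (if k \<le> j then (1::real) else 0))
     = (\<Sum>k<n. if k \<le> min i j then 1 else 0)" by (intro sum.cong) auto
  also have "\<dots> = (\<Sum>k\<in>{k\<in>{..<n}. k \<le> min i j}. 1)" by (simp only: sum.inter_filter[OF finite_lessThan])
  also have "{k\<in>{..<n}. k \<le> min i j} = {..min i j}" using assms by auto
  finally show ?thesis by simp
qed

lemma psd:
  fixes w :: "nat \<Rightarrow> real"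
  shows "(\<Sum>i<n. \<Sum>j<n. real (min (i+1) (j+1)) * w i * w j) \<ge> 0"
proof -
  have e: "real (min (i+1) (j+1)) * w i * w j = (\<Sum>k<n. ((if k \<le> i then w i else 0) * (if k \<le> j then w j else 0)))"
    if "i < n" "j < n" for i j
    unfolding min_as_sum[OF that] sum_distrib_right by (intro sum.cong) auto
  have "(\<Sum>i<n. \<Sum>j<n. real (min (i+1) (j+1)) * w i * w j)
    = (\<Sum>i<n. \<Sum>j<n. \<Sum>k<n. ((if k \<le> i then w i else 0) * (if k \<le> j then w j else 0)))"
    by (rule sum.cong[OF refl], rule sum.cong[OF refl], rule e) auto
  also have "\<dots> = (\<Sum>k<n. (\<Sum>i<n. (if k \<le> i then w i else 0)) * (\<Sum>j<n. (if k \<le> j then w j else 0)))"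
  proof -
    let ?F = "\<lambda>i j k. (if k \<le> i then w i else 0) * (if k \<le> j then w j else (0::real))"
    have "(\<Sum>i<n. \<Sum>j<n. \<Sum>k<n. ?F i j k) = (\<Sum>i<n. \<Sum>k<n. \<Sum>j<n. ?F i j k)"
      by (rule sum.cong[OF refl], rule sum.swap)
    also have "\<dots> = (\<Sum>k<n. \<Sum>i<n. \<Sum>j<n. ?F i j k)" by (rule sum.swap)
    also have "\<dots> = (\<Sum>k<n. (\<Sum>i<n. (if k \<le> i then w i else 0)) * (\<Sum>j<n. (if k \<le> j then w j else 0)))"
      by (simp only: sum_product)
    finally show ?thesis .
  qed
  also have "\<dots> \<ge> 0" by (intro sum_nonneg) (simp add: power2_eq_square[symmetric])
  finally show ?thesis .
qed
lemma row_eq: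
  fixes \<rho> :: "nat \<Rightarrow> real" and v :: "real vec"
  assumes "i < I" "v \<in> carrier_vec I"
  shows "(M_mat I \<rho> *\<^sub>v v) $ i =
    (1 - (\<Sum>j<I. 2 * real (min (i+1) (j+1)) * \<rho> j)) * v $ i
    + (\<Sum>j<I. 2 * real (min (i+1) (j+1)) * \<rho> j * v $ j)"
proof -
  let ?c = "\<lambda>j. 2 * real (min (i+1) (j+1)) * \<rho> j"
  have fin: "finite {0..<I}" by simp
  have iin: "i \<in> {0..<I}" using assms by simp
  have "(M_mat I \<rho> *\<^sub>v v) $ i = (\<Sum>j\<in>{0..<I}. M_mat I \<rho> $$ (i,j) * v $ j)"
    using assms by (simp add: M_mat_def scalar_prod_def)
  also have "\<dots> = M_mat I \<rho> $$ (i,i) * v $ i + (\<Sum>j\<in>{0..<I}-{i}. M_mat I \<rho> $$ (i,j) * v $ j)"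
    by (rule sum.remove[OF fin iin])
  also have "(\<Sum>j\<in>{0..<I}-{i}. M_mat I \<rho> $$ (i,j) * v $ j) = (\<Sum>j\<in>{0..<I}-{i}. ?c j * v $ j)"
    using assms by (intro sum.cong) (auto simp: M_mat_def)
  also have "M_mat I \<rho> $$ (i,i) = 1 - (\<Sum>j\<in>{0..<I}-{i}. ?c j)"
    using assms by (simp add: M_mat_def)
  also have "(\<Sum>j\<in>{0..<I}-{i}. ?c j) = (\<Sum>j\<in>{0..<I}. ?c j) - ?c i"
    using sum.remove[OF fin iin, of ?c] by simp
  also have "(\<Sum>j\<in>{0..<I}-{i}. ?c j * v $ j) = (\<Sum>j\<in>{0..<I}. ?c j * v $ j) - ?c i * v $ i"
    using sum.remove[OF fin iin, of "\<lambda>j. ?c j * v $ j"] by simp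
  finally show ?thesis by (simp add: atLeast0LessThan algebra_simps)
qed

theorem lemma5p1:
  fixes I :: nat and \<rho> :: "nat \<Rightarrow> real"
  assumes "\<And>i. i < I \<Longrightarrow> 0 \<le> \<rho> i \<and> \<rho> i \<le> 1"
    and "(\<Sum>i<I. 2 * real (i+1) * \<rho> i) < 1"
  shows "invertible_mat (M_mat I \<rho>)"
proof -
  let ?A = "M_mat I \<rho>"
  have A: "?A \<in> carrier_mat I I" by (simp add: M_mat_def)
  define c where "c i j = 2 * real (min (i+1) (j+1)) * \<rho> j" for i j
  define d where "d i = 1 - (\<Sum>j<I. c i j)" for i
  have dpos: "d i > 0" if "i < I" for i
  proof -
    have "(\<Sum>j<I. c i j) \<le> (\<Sum>j<I. 2 * real (j+1) * \<rho> j)"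
      unfolding c_def using assms(1) by (intro sum_mono mult_right_mono) auto
    with assms(2) show ?thesis unfolding d_def by simp
  qed
  have "det ?A \<noteq> 0"
  proof
    assume "det ?A = 0"
    then obtain v where v: "v \<in> carrier_vec I" "v \<noteq> 0\<^sub>v I" "?A *\<^sub>v v = 0\<^sub>v I"
      using det_0_iff_vec_prod_zero[OF A] by auto
    define x where "x i = v $ i" for i
    have eq: "d i * x i + (\<Sum>j<I. c i j * x j) = 0" if "i < I" for i
      using row_eq[OF that v(1), of \<rho>] v(3) that unfolding d_def c_def x_def by simp
    define w where "w i = \<rho> i * x i" for i
    have "0 = (\<Sum>i<I. \<rho> i * x i * (d i * x i + (\<Sum>j<I. c i j * x j)))"
      using eq by simp
    also have "\<dots> = (\<Sum>i<I. \<rho> i * d i * x i ^ 2) + 2 * (\<Sum>i<I. \<Sum>j<I. real (min (i+1) (j+1)) * w i * w j)"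
      by (simp add: sum.distrib sum_distrib_left sum_distrib_right c_def w_def power2_eq_square algebra_simps)
    finally have z: "(\<Sum>i<I. \<rho> i * d i * x i ^ 2) + 2 * (\<Sum>i<I. \<Sum>j<I. real (min (i+1) (j+1)) * w i * w j) = 0" by simp
    have nn: "\<forall>i\<in>{..<I}. 0 \<le> \<rho> i * d i * x i ^ 2"
      proof
      fix i assume "i \<in> {..<I}"
      hence "0 \<le> \<rho> i" "0 \<le> d i" using assms(1) dpos by (auto simp: less_imp_le)
      thus "0 \<le> \<rho> i * d i * x i ^ 2" by simp
    qed
    have S: "(\<Sum>i<I. \<rho> i * d i * x i ^ 2) = 0"
      using z psd[where n=I and w=w] sum_nonneg[of "{..<I}" "\<lambda>i. \<rho> i * d i * x i ^ 2", OF nn[rule_format]] by linarith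
    have all0: "\<rho> i * d i * x i ^ 2 = 0" if "i < I" for i
      using sum_nonneg_eq_0_iff[OF finite_lessThan, where f="\<lambda>i. \<rho> i * d i * x i ^ 2"] nn S that by simp
    have w0: "w i = 0" if "i < I" for i
    proof -
      have "\<rho> i = 0 \<or> x i = 0" using all0[OF that] dpos[OF that] by simp
      thus ?thesis unfolding w_def by auto
    qed
    have sz: "(\<Sum>j<I. c i j * x j) = 0" for i
    proof (rule sum.neutral, rule ballI)
      fix j assume "j \<in> {..<I}"
      hence "\<rho> j * x j = 0" using w0 unfolding w_def by simp
      thus "c i j * x j = 0" unfolding c_def by (simp add: mult.assoc)
    qed
    have xz: "x i = 0" if "i < I" for i
      using eq[OF that] dpos[OF that] sz[of i] by simp
    have "v = 0\<^sub>v I" using v(1) xz unfolding x_def by (intro eq_vecI) auto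
    with v(2) show False by simp
  qed
  from det_non_zero_imp_unit[OF A this, of "()"]
  obtain B where B: "B \<in> carrier_mat I I" "B * ?A = 1\<^sub>m I" "?A * B = 1\<^sub>m I"
    by (auto simp: Units_def ring_mat_def)
  show ?thesis unfolding invertible_mat_def inverts_mat_def using A B by auto
qed
end
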